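(* Let $f:\mathbb{R}^n\to\mathbb{R}$ be convex and $L$-smooth ($L>0$), $h$ proper closed convex with $\mathrm{dom}\, h\subset\mathrm{dom}\, f$, $\phi=f+h$, $\lambda>0$ and $x_0\in\mathbb{R}^n$. Run the ACG method (see context) with this $x_0$, $g=f+\frac1{2\lambda}\|\cdot-x_0\|^2$, $\mu=1/\lambda$ and $\psi=\phi+\frac1{2\lambda}\|\cdot-x_0\|^2$, and for $j\ge1$ define $\hat v_j=\frac{x_0-x_j}{A_j}+\frac{x_0-x_j}{\lambda}$ and $\varepsilon_j=\phi(y_j)-\phi_j(x_j)-\langle\hat v_j,y_j-x_j\rangle$, where $\phi_j=\Gamma_j-\frac{1}{2\lambda}\|\cdot-x_0\|^2$. Then the number of ACG iterations needed to find a triple $(\tilde w,u,\eta)=(y_j,\hat v_j,\varepsilon_j)$ satisfying $$u\in\partial_\eta\phi(\tilde w),\qquad \|\lambda u+\tilde w-x_0\|^2+2\lambda\eta\le 0.9\|x_0-\tilde w\|^2$$ is at most $\min\left\{2\sqrt{6\lambda L},\ \left(\tfrac12+\sqrt{\lambda L}\right)\ln(6\lambda L)\right\}$.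
   Context: $\partial_\varepsilon\phi(x)=\{s:\phi(y)\ge\phi(x)+\langle s,y-x\rangle-\varepsilon\ \forall y\}$; $\ell_g(u;x)=g(x)+\langle\nabla g(x),u-x\rangle$. ACG method for $\min\psi=g+h$ ($g$ $\mu$-strongly convex, $(L+\mu)$-smooth): $A_0=0$, $\tau_0=1/L$, $y_0=x_0$; for $j\ge0$: $a_j=\frac{\tau_j+\sqrt{\tau_j^2+4\tau_jA_j}}{2}$, $\tau_{j+1}=\tau_j+\mu a_j/L$, $A_{j+1}=A_j+a_j$, $\tilde x_j=\frac{A_j}{A_{j+1}}y_j+\frac{a_j}{A_{j+1}}x_j$; $\tilde y_{j+1}=\mathrm{argmin}_u\{\ell_g(u;\tilde x_j)+h(u)+\frac{L+\mu}{2}\|u-\tilde x_j\|^2\}$; $y_{j+1}\in\mathrm{Argmin}\{\psi(u):u\in\{y_j,\tilde y_{j+1}\}\}$; $x_{j+1}=\frac{(L+\mu)a_j\tilde y_{j+1}-\frac{A_ja_jL}{A_{j+1}}y_j}{A_{j+1}\mu+1}$. Further $\tilde\gamma_j(u)=\ell_g(u;\tilde x_j)+h(u)+\frac\mu2\|u-\tilde x_j\|^2$, $\gamma_j(u)=\tilde\gamma_j(\tilde y_{j+1})+L\langle\tilde x_j-\tilde y_{j+1},u-\tilde y_{j+1}\rangle+\frac\mu2\|u-\tilde y_{j+1}\|^2$, $\Gamma_0\equiv0$, $\Gamma_{j+1}=(A_j\Gamma_j+a_j\gamma_j)/A_{j+1}$. *)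

theory Defs
  imports "HOL-Analysis.Analysis"
begin

definition ereal_epigraph :: "('a \<Rightarrow> ereal) \<Rightarrow> ('a \<times> real) set" where
  "ereal_epigraph h = {(x, t). h x \<le> ereal t}"

definition proper_closed_convex :: "('a::real_normed_vector \<Rightarrow> ereal) \<Rightarrow> bool" where
  "proper_closed_convex h \<longleftrightarrow>
     (\<forall>x. h x \<noteq> -\<infinity>) \<and> (\<exists>x. h x \<noteq> \<infinity>) \<and>
     convex (ereal_epigraph h) \<and> closed (ereal_epigraph h)"

definition L_smooth :: "real \<Rightarrow> ('a::real_inner \<Rightarrow> real) \<Rightarrow> ('a \<Rightarrow> 'a) \<Rightarrow> bool" where
  "L_smooth L f df \<longleftrightarrow>
     (\<forall>x. (f has_derivative (\<lambda>d. inner (df x) d)) (at x)) \<and>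
     (\<forall>x y. norm (df x - df y) \<le> L * norm (x - y))"

definition eps_subdiff :: "('a::real_inner \<Rightarrow> ereal) \<Rightarrow> real \<Rightarrow> 'a \<Rightarrow> 'a set" where
  "eps_subdiff phi eps x = {s. \<forall>y. phi y \<ge> phi x + ereal (inner s (y - x) - eps)}"

definition lin_approx :: "('a::real_inner \<Rightarrow> real) \<Rightarrow> ('a \<Rightarrow> 'a) \<Rightarrow> 'a \<Rightarrow> 'a \<Rightarrow> real" where
  "lin_approx g dg z u = g z + inner (dg z) (u - z)"

text \<open>
  Indexing: xt j = tilde x_j,
  yt (Suc j) = tilde y_(j+1) (yt 0 is unused), Gam j = Gamma_j.
  Since h is extended-valued, h(tilde y_(j+1)) (finite, being the value at a minimiser of a proper
  function) enters Gamma via real_of_ereal.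
\<close>
definition ACG_run ::
  "real \<Rightarrow> real \<Rightarrow> ('a::real_inner \<Rightarrow> real) \<Rightarrow> ('a \<Rightarrow> 'a) \<Rightarrow> ('a \<Rightarrow> ereal) \<Rightarrow> 'a \<Rightarrow>
   (nat \<Rightarrow> real) \<Rightarrow> (nat \<Rightarrow> real) \<Rightarrow> (nat \<Rightarrow> real) \<Rightarrow>
   (nat \<Rightarrow> 'a) \<Rightarrow> (nat \<Rightarrow> 'a) \<Rightarrow> (nat \<Rightarrow> 'a) \<Rightarrow> (nat \<Rightarrow> 'a) \<Rightarrow> (nat \<Rightarrow> 'a \<Rightarrow> real) \<Rightarrow> bool"
where
  "ACG_run L mu g dg h x0 A tau a x y xt yt Gam \<longleftrightarrow>
     A 0 = 0 \<and> tau 0 = 1 / L \<and> y 0 = x0 \<and> x 0 = x0 \<and> Gam 0 = (\<lambda>u. 0) \<and>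
     (\<forall>j. a j = (tau j + sqrt ((tau j)\<^sup>2 + 4 * tau j * A j)) / 2 \<and>
          tau (Suc j) = tau j + mu * a j / L \<and>
          A (Suc j) = A j + a j \<and>
          xt j = (A j / A (Suc j)) *\<^sub>R y j + (a j / A (Suc j)) *\<^sub>R x j \<and>
          (\<forall>u. ereal (lin_approx g dg (xt j) (yt (Suc j))) + h (yt (Suc j))
                  + ereal ((L + mu) / 2 * (norm (yt (Suc j) - xt j))\<^sup>2)
                \<le> ereal (lin_approx g dg (xt j) u) + h u
                  + ereal ((L + mu) / 2 * (norm (u - xt j))\<^sup>2)) \<and>
          y (Suc j) \<in> {y j, yt (Suc j)} \<and>
          ereal (g (y (Suc j))) + h (y (Suc j)) \<le> ereal (g (y j)) + h (y j) \<and>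
          ereal (g (y (Suc j))) + h (y (Suc j)) \<le> ereal (g (yt (Suc j))) + h (yt (Suc j)) \<and>
          x (Suc j) = (1 / (A (Suc j) * mu + 1)) *\<^sub>R
                        (((L + mu) * a j) *\<^sub>R yt (Suc j) - (A j * a j * L / A (Suc j)) *\<^sub>R y j) \<and>
          Gam (Suc j) = (\<lambda>u. (A j * Gam j u
              + a j * ( (lin_approx g dg (xt j) (yt (Suc j)) + real_of_ereal (h (yt (Suc j)))
                         + mu / 2 * (norm (yt (Suc j) - xt j))\<^sup>2)
                       + L * inner (xt j - yt (Suc j)) (u - yt (Suc j))
                       + mu / 2 * (norm (u - yt (Suc j)))\<^sup>2)) / A (Suc j)))"

end

theory Submission
  imports Defs
begin

lemma line_deriv:
  fixes f :: "'a::real_inner \<Rightarrow> real"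
  assumes "\<forall>x. (f has_derivative (\<lambda>d. inner (df x) d)) (at x)"
  shows "((\<lambda>t. f (x + t *\<^sub>R d)) has_real_derivative inner (df (x + t *\<^sub>R d)) d) (at t within S)"
proof -
  have 1: "((\<lambda>t. x + t *\<^sub>R d) has_derivative (\<lambda>s. s *\<^sub>R d)) (at t within S)"
    by (auto intro!: derivative_eq_intros)
  have "((\<lambda>t. f (x + t *\<^sub>R d)) has_derivative (\<lambda>s. inner (df (x + t *\<^sub>R d)) (s *\<^sub>R d))) (at t within S)"
    using has_derivative_compose[OF 1] assms by blast
  then show ?thesis
    by (rule has_derivative_imp_has_field_derivative) simp
qed

lemma conv_grad:
  fixes f :: "'a::real_inner \<Rightarrow> real"
  assumes cv: "convex_on UNIV f" and d: "\<forall>x. (f has_derivative (\<lambda>d. inner (df x) d)) (at x)"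
  shows "f x + inner (df x) (y - x) \<le> f y"
proof -
  define p where "p = (\<lambda>t::real. f (x + t *\<^sub>R (y - x)))"
  have "convex_on UNIV p"
  proof (rule convex_onI)
    fix t a b :: real assume "0 < t" "t < 1"
    have "x + ((1 - t) *\<^sub>R a + t *\<^sub>R b) *\<^sub>R (y - x)
        = (1 - t) *\<^sub>R (x + a *\<^sub>R (y - x)) + t *\<^sub>R (x + b *\<^sub>R (y - x))"
      by (simp add: algebra_simps)
    then show "p ((1 - t) *\<^sub>R a + t *\<^sub>R b) \<le> (1 - t) * p a + t * p b"
      unfolding p_def using convex_onD[OF cv, of t] \<open>0 < t\<close> \<open>t < 1\<close> by simp
  qed simp
  moreover have "(p has_real_derivative inner (df x) (y - x)) (at 0 within UNIV)"
    unfolding p_def using line_deriv[OF d, of x "y - x" 0 UNIV] by simp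
  ultimately have "p 1 - p 0 \<ge> inner (df x) (y - x) * (1 - 0)"
    by (intro convex_on_imp_above_tangent) auto
  then show ?thesis unfolding p_def by simp
qed

lemma descent:
  fixes f :: "'a::real_inner \<Rightarrow> real"
  assumes sm: "L_smooth L f df"
  shows "f y \<le> f x + inner (df x) (y - x) + L / 2 * (norm (y - x))\<^sup>2"
proof -
  define d where "d = y - x"
  define p where "p = (\<lambda>t::real. f (x + t *\<^sub>R d) - t * inner (df x) d - L / 2 * t\<^sup>2 * (norm d)\<^sup>2)"
  have der: "\<forall>x. (f has_derivative (\<lambda>d. inner (df x) d)) (at x)"
   and lip: "\<forall>x y. norm (df x - df y) \<le> L * norm (x - y)" using sm unfolding L_smooth_def by auto
  have "p 1 \<le> p 0"
  proof (rule DERIV_nonpos_imp_nonincreasing[of 0 1 p])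
    fix t :: real assume t: "0 \<le> t" "t \<le> 1"
    have D: "DERIV p t :> inner (df (x + t *\<^sub>R d)) d - inner (df x) d - L / 2 * (2 * t) * (norm d)\<^sup>2"
      unfolding p_def
      by (auto intro!: derivative_eq_intros line_deriv[OF der])
    have "inner (df (x + t *\<^sub>R d)) d - inner (df x) d = inner (df (x + t *\<^sub>R d) - df x) d"
      by (simp add: inner_diff_left)
    also have "\<dots> \<le> norm (df (x + t *\<^sub>R d) - df x) * norm d" by (rule norm_cauchy_schwarz)
    also have "\<dots> \<le> (L * norm (t *\<^sub>R d)) * norm d"
      using lip[rule_format, of "x + t *\<^sub>R d" x] by (intro mult_right_mono) auto
    also have "\<dots> = L * t * (norm d)\<^sup>2" using t by (simp add: power2_eq_square)
    finally show "\<exists>y. DERIV p t :> y \<and> y \<le> 0" using D by (intro exI[of _ _]) (auto)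
  qed simp
  then show ?thesis unfolding p_def d_def by simp
qed


lemma norm_sq_add: "(norm (a + b))\<^sup>2 = (norm a)\<^sup>2 + 2 * inner a b + (norm (b::'a::real_inner))\<^sup>2"
  by (simp add: power2_norm_eq_inner inner_add_left inner_add_right inner_commute)

lemma norm_sq_diff: "(norm (a - b))\<^sup>2 = (norm a)\<^sup>2 - 2 * inner a b + (norm (b::'a::real_inner))\<^sup>2"
  by (simp add: power2_norm_eq_inner inner_diff_left inner_diff_right inner_commute)

lemma small_t:
  fixes D M :: real
  assumes "\<forall>t. 0 < t \<and> t \<le> 1 \<longrightarrow> 0 \<le> t * D + t\<^sup>2 * M" "M \<ge> 0"
  shows "D \<ge> 0"
proof (rule ccontr)
  assume "\<not> D \<ge> 0"
  hence D: "D < 0" by simp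
  define t where "t = min 1 (- D / (2 * M + 1))"
  have t0: "0 < t" unfolding t_def using D assms(2) by (auto simp: divide_neg_pos)
  have t1: "t \<le> 1" unfolding t_def by simp
  have "t \<le> - D / (2 * M + 1)" unfolding t_def by simp
  hence "t * (2 * M + 1) \<le> (- D / (2 * M + 1)) * (2 * M + 1)" using assms(2) by (intro mult_right_mono) auto
  hence "t * (2 * M + 1) \<le> - D" using assms(2) by simp
  hence "2 * (t * M) \<le> - D" using t0 by (simp add: algebra_simps)
  hence "D + t * M < 0" using D by linarith
  hence "t * (D + t * M) < 0" using t0 by (simp add: mult_pos_neg)
  moreover have "0 \<le> t * D + t\<^sup>2 * M" using assms(1) t0 t1 by blast
  ultimately show False by (simp add: power2_eq_square algebra_simps)
qed

lemma prox_opt: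
  fixes h :: "'a::real_inner \<Rightarrow> ereal"
  assumes cvx: "convex (ereal_epigraph h)" and nm: "\<forall>x. h x \<noteq> -\<infinity>" and fin: "h y \<noteq> \<infinity>"
    and K: "K \<ge> 0"
    and opt: "\<forall>u. ereal (c + inner p (y - z)) + h y + ereal (K / 2 * (norm (y - z))\<^sup>2)
                 \<le> ereal (c + inner p (u - z)) + h u + ereal (K / 2 * (norm (u - z))\<^sup>2)"
  shows "h y + ereal (inner p (y - u) + K * inner (z - y) (u - y)) \<le> h u"
proof (cases "h u = \<infinity>")
  case True then show ?thesis by simp
next
  case False
  obtain hu where hu: "h u = ereal hu" using False nm by (cases "h u") auto
  obtain hy where hy: "h y = ereal hy" using fin nm by (cases "h y") auto
  define D where "D = inner p (u - y) + hu - hy + K * inner (y - z) (u - y)"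
  define M where "M = K / 2 * (norm (u - y))\<^sup>2"
  have "\<forall>t. 0 < t \<and> t \<le> 1 \<longrightarrow> 0 \<le> t * D + t\<^sup>2 * M"
  proof (intro allI impI)
    fix t :: real assume t: "0 < t \<and> t \<le> 1"
    define w where "w = (1 - t) *\<^sub>R y + t *\<^sub>R u"
    have ey: "(y, hy) \<in> ereal_epigraph h" and eu: "(u, hu) \<in> ereal_epigraph h"
      using hy hu unfolding ereal_epigraph_def by auto
    have "(1 - t) *\<^sub>R (y, hy) + t *\<^sub>R (u, hu) \<in> ereal_epigraph h"
      using convexD[OF cvx ey eu, of "1 - t" t] t by auto
    hence "h w \<le> ereal ((1 - t) * hy + t * hu)" unfolding ereal_epigraph_def w_def by simp
    moreover obtain hw where hw: "h w = ereal hw"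
      using calculation nm by (cases "h w") auto
    ultimately have hwle: "hw \<le> (1 - t) * hy + t * hu" by simp
    have "ereal (c + inner p (y - z)) + h y + ereal (K / 2 * (norm (y - z))\<^sup>2)
                 \<le> ereal (c + inner p (w - z)) + h w + ereal (K / 2 * (norm (w - z))\<^sup>2)"
      using opt by blast
    hence o: "c + inner p (y - z) + K / 2 * (norm (y - z))\<^sup>2 + hy
                 \<le> c + inner p (w - z) + K / 2 * (norm (w - z))\<^sup>2 + hw"
      using hy hw by simp
    have wz: "w - z = (y - z) + t *\<^sub>R (u - y)" unfolding w_def by (simp add: algebra_simps)
    have n: "(norm (w - z))\<^sup>2 = (norm (y - z))\<^sup>2 + 2 * t * inner (y - z) (u - y) + t\<^sup>2 * (norm (u - y))\<^sup>2"
      unfolding wz norm_sq_add by (simp add: power2_eq_square)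
    have i: "inner p (w - z) = inner p (y - z) + t * inner p (u - y)"
      unfolding wz by (simp add: inner_add_right)
    have "t * D + t\<^sup>2 * M = t * inner p (u - y) + t * K * inner (y - z) (u - y) + K / 2 * (t\<^sup>2 * (norm (u - y))\<^sup>2) + t * (hu - hy)"
      unfolding D_def M_def by (simp add: algebra_simps)
    have e1: "inner p (w - z) - inner p (y - z) = t * inner p (u - y)" using i by simp
    have e2: "K / 2 * (norm (w - z))\<^sup>2 - K / 2 * (norm (y - z))\<^sup>2 = t * K * inner (y - z) (u - y) + K / 2 * (t\<^sup>2 * (norm (u - y))\<^sup>2)"
      unfolding n by (simp add: algebra_simps)
    have e3: "(1 - t) * hy + t * hu = hy + t * (hu - hy)" by (simp add: algebra_simps)
    show "0 \<le> t * D + t\<^sup>2 * M"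
      using o hwle e1 e2 e3 \<open>t * D + t\<^sup>2 * M = _\<close> by linarith
  qed
  moreover have "M \<ge> 0" unfolding M_def using K by simp
  ultimately have "D \<ge> 0" by (rule small_t)
  have "inner p (y - u) = - inner p (u - y)" by (simp add: inner_diff_right)
  moreover have "inner (z - y) (u - y) = - inner (y - z) (u - y)" by (simp add: inner_diff_left)
  ultimately have "hy + (inner p (y - u) + K * inner (z - y) (u - y)) \<le> hu"
    using \<open>D \<ge> 0\<close> unfolding D_def by simp
  then show ?thesis using hu hy by simp
qed

locale acgl =
  fixes f :: "'a::euclidean_space \<Rightarrow> real" and df :: "'a \<Rightarrow> 'a"
    and h :: "'a \<Rightarrow> ereal" and L lam :: real and x0 :: 'a
    and A tau a :: "nat \<Rightarrow> real" and x y xt yt :: "nat \<Rightarrow> 'a" and Gam :: "nat \<Rightarrow> 'a \<Rightarrow> real"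
  assumes L_pos: "L > 0"
    and f_convex: "convex_on UNIV f"
    and f_smooth: "L_smooth L f df"
    and h_pcc: "proper_closed_convex h"
    and lam_pos: "lam > 0"
    and acg: "ACG_run L (1 / lam) (\<lambda>u. f u + 1 / (2 * lam) * (norm (u - x0))\<^sup>2)
                (\<lambda>u. df u + (1 / lam) *\<^sub>R (u - x0)) h x0 A tau a x y xt yt Gam"
begin

definition g where "g u = f u + 1 / (2 * lam) * (norm (u - x0))\<^sup>2"
definition dg where "dg u = df u + (1 / lam) *\<^sub>R (u - x0)"
definition psi where "psi u = ereal (g u) + h u"
definition gam where "gam j u = (lin_approx g dg (xt j) (yt (Suc j)) + real_of_ereal (h (yt (Suc j)))
                         + 1 / lam / 2 * (norm (yt (Suc j) - xt j))\<^sup>2)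
                       + L * inner (xt j - yt (Suc j)) (u - yt (Suc j))
                       + 1 / lam / 2 * (norm (u - yt (Suc j)))\<^sup>2"

lemma acg': "ACG_run L (1 / lam) g dg h x0 A tau a x y xt yt Gam"
proof -
  have "g = (\<lambda>u. f u + 1 / (2 * lam) * (norm (u - x0))\<^sup>2)" by (rule ext) (simp add: g_def)
  moreover have "dg = (\<lambda>u. df u + (1 / lam) *\<^sub>R (u - x0))" by (rule ext) (simp add: dg_def)
  ultimately show ?thesis using acg by simp
qed

lemma A0: "A 0 = 0" and tau0: "tau 0 = 1 / L" and y0: "y 0 = x0" and xx0: "x 0 = x0"
  and Gam0: "Gam 0 = (\<lambda>u. 0)"
  using acg' unfolding ACG_run_def by blast+

lemma steps: "\<forall>j. a j = (tau j + sqrt ((tau j)\<^sup>2 + 4 * tau j * A j)) / 2 \<and>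
          tau (Suc j) = tau j + (1 / lam) * a j / L \<and>
          A (Suc j) = A j + a j \<and>
          xt j = (A j / A (Suc j)) *\<^sub>R y j + (a j / A (Suc j)) *\<^sub>R x j \<and>
          (\<forall>u. ereal (lin_approx g dg (xt j) (yt (Suc j))) + h (yt (Suc j))
                  + ereal ((L + (1 / lam)) / 2 * (norm (yt (Suc j) - xt j))\<^sup>2)
                \<le> ereal (lin_approx g dg (xt j) u) + h u
                  + ereal ((L + (1 / lam)) / 2 * (norm (u - xt j))\<^sup>2)) \<and>
          y (Suc j) \<in> {y j, yt (Suc j)} \<and>
          ereal (g (y (Suc j))) + h (y (Suc j)) \<le> ereal (g (y j)) + h (y j) \<and>
          ereal (g (y (Suc j))) + h (y (Suc j)) \<le> ereal (g (yt (Suc j))) + h (yt (Suc j)) \<and>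
          x (Suc j) = (1 / (A (Suc j) * (1 / lam) + 1)) *\<^sub>R
                        (((L + (1 / lam)) * a j) *\<^sub>R yt (Suc j) - (A j * a j * L / A (Suc j)) *\<^sub>R y j) \<and>
          Gam (Suc j) = (\<lambda>u. (A j * Gam j u
              + a j * ( (lin_approx g dg (xt j) (yt (Suc j)) + real_of_ereal (h (yt (Suc j)))
                         + (1 / lam) / 2 * (norm (yt (Suc j) - xt j))\<^sup>2)
                       + L * inner (xt j - yt (Suc j)) (u - yt (Suc j))
                       + (1 / lam) / 2 * (norm (u - yt (Suc j)))\<^sup>2)) / A (Suc j))"
  using acg' unfolding ACG_run_def by blast

lemma a_eq: "a j = (tau j + sqrt ((tau j)\<^sup>2 + 4 * tau j * A j)) / 2"
  using steps by blast
lemma tau_suc: "tau (Suc j) = tau j + 1 / lam * a j / L"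
  using steps by blast
lemma A_suc: "A (Suc j) = A j + a j"
  using steps by blast
lemma xt_eq: "xt j = (A j / A (Suc j)) *\<^sub>R y j + (a j / A (Suc j)) *\<^sub>R x j"
  using steps by blast
lemma opt: "\<forall>u. ereal (lin_approx g dg (xt j) (yt (Suc j))) + h (yt (Suc j))
                  + ereal ((L + 1 / lam) / 2 * (norm (yt (Suc j) - xt j))\<^sup>2)
                \<le> ereal (lin_approx g dg (xt j) u) + h u
                  + ereal ((L + 1 / lam) / 2 * (norm (u - xt j))\<^sup>2)"
  using steps by blast
lemma y_suc: "y (Suc j) \<in> {y j, yt (Suc j)}"
  using steps by blast
lemma psi_mono: "psi (y (Suc j)) \<le> psi (y j)"
  using steps unfolding psi_def by blast
lemma psi_yt: "psi (y (Suc j)) \<le> psi (yt (Suc j))"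
  using steps unfolding psi_def by blast
lemma x_suc: "x (Suc j) = (1 / (A (Suc j) * (1 / lam) + 1)) *\<^sub>R
                        (((L + 1 / lam) * a j) *\<^sub>R yt (Suc j) - (A j * a j * L / A (Suc j)) *\<^sub>R y j)"
  using steps by blast
lemma Gam_suc0: "Gam (Suc j) = (\<lambda>u. (A j * Gam j u
              + a j * ( (lin_approx g dg (xt j) (yt (Suc j)) + real_of_ereal (h (yt (Suc j)))
                         + 1 / lam / 2 * (norm (yt (Suc j) - xt j))\<^sup>2)
                       + L * inner (xt j - yt (Suc j)) (u - yt (Suc j))
                       + 1 / lam / 2 * (norm (u - yt (Suc j)))\<^sup>2)) / A (Suc j))"
  using steps by blast

lemma Gam_suc: "Gam (Suc j) u = (A j * Gam j u + a j * gam j u) / A (Suc j)"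
  unfolding Gam_suc0 gam_def by simp

lemma seq: "tau j * L = 1 + (1 / lam) * A j \<and> A j \<ge> 0"
proof (induction j)
  case 0 then show ?case using A0 tau0 L_pos by simp
next
  case (Suc j)
  have tp: "tau j > 0"
  proof -
    have "tau j * L > 0" using Suc lam_pos by (simp add: add_pos_nonneg)
    then show ?thesis using L_pos by (simp add: zero_less_mult_iff)
  qed
  have "(tau j)\<^sup>2 + 4 * tau j * A j \<ge> 0" using tp Suc by simp
  hence "sqrt ((tau j)\<^sup>2 + 4 * tau j * A j) \<ge> 0" by simp
  hence "a j \<ge> 0" unfolding a_eq using tp by simp
  moreover have "tau (Suc j) * L = tau j * L + 1 / lam * a j"
    unfolding tau_suc using L_pos by (simp add: algebra_simps)
  ultimately show ?case using Suc unfolding A_suc by (simp add: algebra_simps)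
qed

lemma tau_pos: "tau j > 0"
proof -
  have "tau j * L > 0" using seq[of j] lam_pos by (simp add: add_pos_nonneg)
  then show ?thesis using L_pos by (simp add: zero_less_mult_iff)
qed

lemma A_nonneg: "A j \<ge> 0" using seq by blast

lemma a_ge: "a j \<ge> tau j / 2 + sqrt (tau j * A j)"
proof -
  have "sqrt (4 * (tau j * A j)) \<le> sqrt ((tau j)\<^sup>2 + 4 * tau j * A j)"
    by (simp add: mult.assoc)
  moreover have "sqrt (4 * (tau j * A j)) = 2 * sqrt (tau j * A j)"
    by (simp add: real_sqrt_mult)
  ultimately show ?thesis unfolding a_eq by simp
qed

lemma a_pos: "a j > 0"
proof -
  have "sqrt (tau j * A j) \<ge> 0" using tau_pos[of j] A_nonneg[of j] by simp
  then show ?thesis using a_ge[of j] tau_pos[of j] by linarith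
qed

lemma Asuc_pos: "A (Suc j) > 0"
  using A_suc a_pos A_nonneg by (simp add: add_nonneg_pos)

lemma A_pos: "j \<ge> 1 \<Longrightarrow> A j > 0"
  using Asuc_pos by (cases j) auto

lemma a_sq: "(a j)\<^sup>2 = tau j * A (Suc j)"
proof -
  define s where "s = sqrt ((tau j)\<^sup>2 + 4 * tau j * A j)"
  have s2: "s\<^sup>2 = (tau j)\<^sup>2 + 4 * tau j * A j"
    unfolding s_def using tau_pos[of j] A_nonneg[of j] by (simp add: add_nonneg_nonneg)
  have "(a j)\<^sup>2 = ((tau j)\<^sup>2 + 2 * tau j * s + s\<^sup>2) / 4"
    unfolding a_eq s_def[symmetric] by (simp add: power2_eq_square algebra_simps)
  also have "\<dots> = tau j * (A j + (tau j + s) / 2)" unfolding s2 by (simp add: power2_eq_square algebra_simps)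
  finally show ?thesis unfolding A_suc a_eq s_def[symmetric] .
qed

lemma a_sqL: "(a j)\<^sup>2 * L = (1 + (1 / lam) * A j) * A (Suc j)"
proof -
  have "(a j)\<^sup>2 * L = (tau j * L) * A (Suc j)" using a_sq[of j] by simp
  then show ?thesis using seq[of j] by simp
qed

lemma a0: "a 0 = 1 / L" and A1: "A 1 = 1 / L"
proof -
  show "a 0 = 1 / L" unfolding a_eq using A0 tau0 L_pos by simp
  then show "A 1 = 1 / L" using A_suc[of 0] A0 by simp
qed

lemma aL_ge: "a j * L \<ge> 1 / 2 + sqrt (A j * L)"
proof -
  have tl: "tau j * L \<ge> 1" using seq[of j] lam_pos A_nonneg[of j] by simp
  have "a j * L \<ge> (tau j / 2 + sqrt (tau j * A j)) * L" using a_ge L_pos by (simp add: mult_right_mono)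
  moreover have "(tau j / 2 + sqrt (tau j * A j)) * L = tau j * L / 2 + sqrt ((tau j * L) * (A j * L))"
    using L_pos by (simp add: algebra_simps real_sqrt_mult real_sqrt_mult_self)
  moreover have "sqrt ((tau j * L) * (A j * L)) \<ge> sqrt (A j * L)"
    using tl A_nonneg[of j] L_pos by (intro real_sqrt_le_mono) (simp add: mult_right_mono[of 1 "tau j * L" "A j * L", simplified])
  ultimately show ?thesis using tl by linarith
qed

lemma quad_growth: "A j * L \<ge> (real j)\<^sup>2 / 4"
proof (induction j)
  case 0 then show ?case using A0 by simp
next
  case (Suc j)
  have "sqrt (A j * L) \<ge> real j / 2"
    using Suc real_sqrt_le_mono[OF Suc] by (simp add: real_sqrt_divide)
  then have "A (Suc j) * L \<ge> (real j)\<^sup>2 / 4 + 1 / 2 + real j / 2"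
    using Suc aL_ge[of j] unfolding A_suc by (simp add: algebra_simps)
  then show ?case by (simp add: power2_eq_square algebra_simps)
qed


lemma a_ge2: "a j \<ge> A j * (1 / sqrt (lam * L) + 1 / (2 * lam * L))"
proof -
  define k where "k = 1 / (lam * L)"
  have k0: "k > 0" unfolding k_def using lam_pos L_pos by simp
  have A0': "A j \<ge> 0" by (rule A_nonneg)
  have "tau j * L \<ge> A j / lam" using seq[of j] by simp
  hence tk: "tau j \<ge> A j * k" unfolding k_def using L_pos lam_pos by (simp add: field_simps)
  have Ak: "A j * k \<ge> 0" using A0' k0 by simp
  have "(A j * k)\<^sup>2 + 4 * (A j * k) * A j \<le> (tau j)\<^sup>2 + 4 * tau j * A j"
    using tk Ak A0' by (intro add_mono power_mono mult_right_mono) auto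
  hence s1: "sqrt ((A j * k)\<^sup>2 + 4 * (A j * k) * A j) \<le> sqrt ((tau j)\<^sup>2 + 4 * tau j * A j)"
    by (rule real_sqrt_le_mono)
  have "4 * (A j * k) * A j \<le> (A j * k)\<^sup>2 + 4 * (A j * k) * A j" by simp
  hence "sqrt (4 * (A j * k) * A j) \<le> sqrt ((A j * k)\<^sup>2 + 4 * (A j * k) * A j)"
    by (rule real_sqrt_le_mono)
  moreover have "sqrt (4 * (A j * k) * A j) = 2 * A j * sqrt k"
  proof -
    have "4 * (A j * k) * A j = (2 * A j)\<^sup>2 * k" by (simp add: power2_eq_square)
    then show ?thesis using A0' by (simp add: real_sqrt_mult)
  qed
  ultimately have "A j * k + 2 * A j * sqrt k \<le> tau j + sqrt ((tau j)\<^sup>2 + 4 * tau j * A j)"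
    using s1 tk by linarith
  hence "a j \<ge> (A j * k + 2 * A j * sqrt k) / 2" unfolding a_eq by (simp add: divide_right_mono)
  moreover have "(A j * k + 2 * A j * sqrt k) / 2 = A j * (sqrt k + k / 2)" by (simp add: algebra_simps)
  moreover have "sqrt k + k / 2 = 1 / sqrt (lam * L) + 1 / (2 * lam * L)" unfolding k_def by (simp add: real_sqrt_divide)
  ultimately show ?thesis by simp
qed

lemma exp_growth: "A (Suc k) * L \<ge> (1 + 1 / sqrt (lam * L) + 1 / (2 * lam * L)) ^ k"
proof (induction k)
  case 0 then show ?case using A1 L_pos by simp
next
  case (Suc k)
  define p where "p = 1 + 1 / sqrt (lam * L) + 1 / (2 * lam * L)"
  have p0: "p \<ge> 0" unfolding p_def using lam_pos L_pos by simp
  have "A (Suc (Suc k)) \<ge> A (Suc k) * p"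
    using a_ge2[of "Suc k"] unfolding A_suc[of "Suc k"] p_def by (simp add: algebra_simps)
  hence "A (Suc (Suc k)) * L \<ge> (A (Suc k) * L) * p" using L_pos by (simp add: mult_right_mono algebra_simps)
  moreover have "(A (Suc k) * L) * p \<ge> p ^ k * p" using Suc p0 unfolding p_def by (simp add: mult_right_mono)
  ultimately show ?case unfolding p_def by (simp add: mult.commute)
qed

lemma quad_id: "1 / (2 * lam) * (norm (u - x0))\<^sup>2 = 1 / (2 * lam) * (norm (z - x0))\<^sup>2
    + inner ((1 / lam) *\<^sub>R (z - x0)) (u - z) + 1 / lam / 2 * (norm (u - z))\<^sup>2"
proof -
  have "u - x0 = (z - x0) + (u - z)" by simp
  hence E: "(norm (u - x0))\<^sup>2 = (norm (z - x0))\<^sup>2 + 2 * inner (z - x0) (u - z) + (norm (u - z))\<^sup>2"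
    by (metis norm_sq_add)
  have R: "\<And>X Y Z::real. 1 / (2 * lam) * (X + 2 * Y + Z) = 1 / (2 * lam) * X + (1 / lam) * Y + 1 / lam / 2 * Z"
    using lam_pos by (simp add: field_simps)
  show ?thesis unfolding E R by simp
qed

lemma f_der: "\<forall>x. (f has_derivative (\<lambda>d. inner (df x) d)) (at x)"
  using f_smooth unfolding L_smooth_def by blast

lemma g_split: "g u = g z + inner ((1 / lam) *\<^sub>R (z - x0)) (u - z) + 1 / lam / 2 * (norm (u - z))\<^sup>2 + (f u - f z)"
  and dg_split: "inner (dg z) (u - z) = inner (df z) (u - z) + inner ((1 / lam) *\<^sub>R (z - x0)) (u - z)"
  unfolding g_def dg_def quad_id[of u z] by (simp_all add: inner_add_left)

lemma g_lower: "g u \<ge> g z + inner (dg z) (u - z) + 1 / lam / 2 * (norm (u - z))\<^sup>2"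
proof -
  have "f u \<ge> f z + inner (df z) (u - z)" using conv_grad[OF f_convex f_der] .
  then show ?thesis using g_split[of u z] dg_split[of z u] by linarith
qed

lemma g_upper: "g u \<le> g z + inner (dg z) (u - z) + (L + 1 / lam) / 2 * (norm (u - z))\<^sup>2"
proof -
  have "f u \<le> f z + inner (df z) (u - z) + L / 2 * (norm (u - z))\<^sup>2" using descent[OF f_smooth] .
  moreover have "(L + 1 / lam) / 2 * (norm (u - z))\<^sup>2 = L / 2 * (norm (u - z))\<^sup>2 + 1 / lam / 2 * (norm (u - z))\<^sup>2"
    by (simp add: algebra_simps)
  ultimately show ?thesis using g_split[of u z] dg_split[of z u] by linarith
qed

lemma h_nm: "h u \<noteq> -\<infinity>" using h_pcc unfolding proper_closed_convex_def by blast
lemma h_cvx: "convex (ereal_epigraph h)" using h_pcc unfolding proper_closed_convex_def by blast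
lemma h_ex: "\<exists>u. h u \<noteq> \<infinity>" using h_pcc unfolding proper_closed_convex_def by blast

lemma h_yt_fin: "h (yt (Suc j)) \<noteq> \<infinity>"
proof
  assume inf: "h (yt (Suc j)) = \<infinity>"
  obtain u where u: "h u \<noteq> \<infinity>" using h_ex by blast
  have "ereal (lin_approx g dg (xt j) u) + h u + ereal ((L + 1 / lam) / 2 * (norm (u - xt j))\<^sup>2) \<noteq> \<infinity>"
    using u h_nm[of u] by (cases "h u") auto
  moreover have "ereal (lin_approx g dg (xt j) (yt (Suc j))) + h (yt (Suc j))
                  + ereal ((L + 1 / lam) / 2 * (norm (yt (Suc j) - xt j))\<^sup>2) = \<infinity>"
    using inf by simp
  ultimately show False using opt[of j] by (metis ereal_infty_less_eq(1))
qed

lemma prox_yt: "h (yt (Suc j)) + ereal (inner (dg (xt j)) (yt (Suc j) - u)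
         + (L + 1 / lam) * inner (xt j - yt (Suc j)) (u - yt (Suc j))) \<le> h u"
proof (rule prox_opt[OF h_cvx])
  show "\<forall>x. h x \<noteq> - \<infinity>" using h_nm by blast
  show "h (yt (Suc j)) \<noteq> \<infinity>" by (rule h_yt_fin)
  show "0 \<le> L + 1 / lam" using L_pos lam_pos by simp
  show "\<forall>u. ereal (g (xt j) + inner (dg (xt j)) (yt (Suc j) - xt j)) + h (yt (Suc j))
           + ereal ((L + 1 / lam) / 2 * (norm (yt (Suc j) - xt j))\<^sup>2)
         \<le> ereal (g (xt j) + inner (dg (xt j)) (u - xt j)) + h u + ereal ((L + 1 / lam) / 2 * (norm (u - xt j))\<^sup>2)"
    using opt[of j] unfolding lin_approx_def .
qed

lemma gam_le: "ereal (gam j u) \<le> psi u"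
proof (cases "h u = \<infinity>")
  case True then show ?thesis unfolding psi_def by simp
next
  case False
  obtain hu where hu: "h u = ereal hu" using False h_nm[of u] by (cases "h u") auto
  obtain hy where hy: "h (yt (Suc j)) = ereal hy" using h_yt_fin[of j] h_nm by (cases "h (yt (Suc j))") auto
  define yy where "yy = yt (Suc j)"
  define z where "z = xt j"
  define p where "p = dg z"
  have hy': "h yy = ereal hy" unfolding yy_def by (rule hy)
  have P: "hy + (inner p (yy - u) + (L + 1 / lam) * inner (z - yy) (u - yy)) \<le> hu"
    using prox_yt[of j u] hu hy unfolding yy_def z_def p_def by simp
  have G: "g u \<ge> g z + inner p (u - z) + 1 / lam / 2 * (norm (u - z))\<^sup>2"
    unfolding p_def by (rule g_lower)
  have N: "(norm (u - z))\<^sup>2 = (norm (u - yy))\<^sup>2 + 2 * inner (u - yy) (yy - z) + (norm (yy - z))\<^sup>2"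
    using norm_sq_add[of "u - yy" "yy - z"] by simp
  have I1: "inner p (u - z) + inner p (yy - u) = inner p (yy - z)" by (simp add: inner_diff_right)
  have I2: "inner (z - yy) (u - yy) = - inner (u - yy) (yy - z)" by (simp add: inner_diff_left inner_diff_right inner_commute)
  have "gam j u = g z + inner p (yy - z) + hy + 1 / lam / 2 * (norm (yy - z))\<^sup>2
      + L * inner (z - yy) (u - yy) + 1 / lam / 2 * (norm (u - yy))\<^sup>2"
    unfolding gam_def lin_approx_def yy_def[symmetric] z_def[symmetric] p_def[symmetric] hy' by simp
  also have "\<dots> \<le> g u + hu"
  proof -
    have e1: "(L + 1 / lam) * inner (z - yy) (u - yy) = L * inner (z - yy) (u - yy) + (1 / lam) * inner (z - yy) (u - yy)"
      by (simp add: algebra_simps)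
    have e2: "1 / lam / 2 * (norm (u - z))\<^sup>2 = 1 / lam / 2 * (norm (u - yy))\<^sup>2 + (1 / lam) * inner (u - yy) (yy - z) + 1 / lam / 2 * (norm (yy - z))\<^sup>2"
      unfolding N by (simp add: algebra_simps)
    have e3: "(1 / lam) * inner (z - yy) (u - yy) = - ((1 / lam) * inner (u - yy) (yy - z))"
      unfolding I2 by simp
    show ?thesis using P G I1 e1 e2 e3 by linarith
  qed
  finally show ?thesis unfolding psi_def hu by simp
qed
end

lemma real_comb:
  fixes SU SX GUA GXA gu gx C ix A mu nu1 nx1 G0 L j1 jx nu2 nx2 nd p1 p2 i1 q r a q' A' :: real
  assumes "SU = GUA + a * gu" "SX = GXA + a * gx"
    "GUA = C + i1 + A * mu / 2 * nu1" "GXA = C + ix + A * mu / 2 * nx1"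
    "gu = G0 + L * j1 + mu / 2 * nu2" "gx = G0 + L * jx + mu / 2 * nx2"
    "nu1 = nd + 2 * p1 + nx1" "nu2 = nd + 2 * p2 + nx2"
    "i1 = q + ix" "j1 = r + jx"
    "q = q' - A * mu * p1 - a * L * r - a * mu * p2" "A' = A + a"
  shows "SU = SX + q' + A' * mu / 2 * nd"
  apply (simp only: assms)
  by (simp add: field_simps)

context acgl begin

lemma Gam_suc_mul: "A (Suc j) * Gam (Suc j) u = A j * Gam j u + a j * gam j u"
  using Gam_suc[of j u] Asuc_pos[of j] by simp

lemma Gam_le_mul: "psi u = ereal P \<Longrightarrow> A j * Gam j u \<le> A j * P"
proof (induction j)
  case 0 then show ?case using A0 by simp
next
  case (Suc j)
  have "gam j u \<le> P" using gam_le[of j u] Suc.prems by simp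
  hence "a j * gam j u \<le> a j * P" using a_pos[of j] by simp
  moreover have "A (Suc j) * P = A j * P + a j * P" unfolding A_suc by (simp add: algebra_simps)
  ultimately show ?case using Gam_suc_mul[of j u] Suc by linarith
qed

lemma Gam_le: "j \<ge> 1 \<Longrightarrow> psi u = ereal P \<Longrightarrow> Gam j u \<le> P"
  using Gam_le_mul[of u P j] A_pos[of j] by simp

lemma gam_form: "gam j u = gam j (yt (Suc j)) + L * inner (xt j - yt (Suc j)) (u - yt (Suc j))
     + 1 / lam / 2 * (norm (u - yt (Suc j)))\<^sup>2"
  unfolding gam_def by simp

lemma W_zero: "(x0 - x j) + (A j * (1 / lam)) *\<^sub>R (x (Suc j) - x j) + (a j * L) *\<^sub>R (xt j - yt (Suc j))
   + (a j * (1 / lam)) *\<^sub>R (x (Suc j) - yt (Suc j)) - (x0 - x (Suc j)) = 0"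
proof -
  define A' where "A' = A (Suc j)"
  define mu where "mu = 1 / lam"
  have A'pos: "A' > 0" unfolding A'_def by (rule Asuc_pos)
  have mu0: "mu > 0" unfolding mu_def using lam_pos by simp
  have e1: "(1 + A' * mu) *\<^sub>R x (Suc j) = ((L + mu) * a j) *\<^sub>R yt (Suc j) - (A j * a j * L / A') *\<^sub>R y j"
  proof -
    have "A' * mu + 1 > 0" using A'pos mu0 by (simp add: add_pos_pos)
    then show ?thesis unfolding x_suc A'_def[symmetric] mu_def[symmetric] by (simp add: add.commute)
  qed
  have e2: "(a j * L) *\<^sub>R xt j = (a j * L * A j / A') *\<^sub>R y j + ((a j)\<^sup>2 * L / A') *\<^sub>R x j"
    unfolding xt_eq A'_def[symmetric] by (simp add: scaleR_add_right power2_eq_square)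
  have e3: "(a j)\<^sup>2 * L / A' = 1 + mu * A j" using a_sqL[of j] A'pos unfolding A'_def[symmetric] mu_def[symmetric]
    by (simp add: field_simps)
  have "(x0 - x j) + (A j * mu) *\<^sub>R (x (Suc j) - x j) + (a j * L) *\<^sub>R (xt j - yt (Suc j))
   + (a j * mu) *\<^sub>R (x (Suc j) - yt (Suc j)) - (x0 - x (Suc j))
    = (1 + A' * mu) *\<^sub>R x (Suc j) - (1 + mu * A j) *\<^sub>R x j + (a j * L) *\<^sub>R xt j - ((L + mu) * a j) *\<^sub>R yt (Suc j)"
    unfolding A'_def A_suc by (simp add: algebra_simps)
  also have "\<dots> = 0" unfolding e1 e2 e3 by (simp add: algebra_simps)
  finally show ?thesis unfolding mu_def .
qed




lemma Gam_quad: "A j * Gam j u = A j * Gam j (x j) + inner (x0 - x j) (u - x j)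
     + A j * (1 / lam) / 2 * (norm (u - x j))\<^sup>2"
proof (induction j arbitrary: u)
  case 0 then show ?case using A0 xx0 by simp
next
  case (Suc j)
  define xj where "xj = x j"
  define x' where "x' = x (Suc j)"
  define yy where "yy = yt (Suc j)"
  define z where "z = xt j"
  define mu where "mu = 1 / lam"
  define d where "d = u - x'"
  have IHu: "A j * Gam j u = A j * Gam j xj + inner (x0 - xj) (u - xj) + A j * mu / 2 * (norm (u - xj))\<^sup>2"
    using Suc.IH[of u] unfolding xj_def mu_def .
  have IHx: "A j * Gam j x' = A j * Gam j xj + inner (x0 - xj) (x' - xj) + A j * mu / 2 * (norm (x' - xj))\<^sup>2"
    using Suc.IH[of x'] unfolding xj_def mu_def .
  have Gu: "gam j u = gam j yy + L * inner (z - yy) (u - yy) + mu / 2 * (norm (u - yy))\<^sup>2"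
    using gam_form[of j u] unfolding yy_def z_def mu_def .
  have Gx: "gam j x' = gam j yy + L * inner (z - yy) (x' - yy) + mu / 2 * (norm (x' - yy))\<^sup>2"
    using gam_form[of j x'] unfolding yy_def z_def mu_def .
  have n1: "(norm (u - xj))\<^sup>2 = (norm d)\<^sup>2 + 2 * inner (x' - xj) d + (norm (x' - xj))\<^sup>2"
  proof -
    have e: "u - xj = d + (x' - xj)" unfolding d_def by simp
    show ?thesis unfolding e norm_sq_add inner_commute[of d] ..
  qed
  have n2: "(norm (u - yy))\<^sup>2 = (norm d)\<^sup>2 + 2 * inner (x' - yy) d + (norm (x' - yy))\<^sup>2"
  proof -
    have e: "u - yy = d + (x' - yy)" unfolding d_def by simp
    show ?thesis unfolding e norm_sq_add inner_commute[of d] ..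
  qed
  have i1: "inner (x0 - xj) (u - xj) = inner (x0 - xj) d + inner (x0 - xj) (x' - xj)"
  proof -
    have e: "u - xj = d + (x' - xj)" unfolding d_def by simp
    show ?thesis unfolding e inner_add_right ..
  qed
  have i2: "inner (z - yy) (u - yy) = inner (z - yy) d + inner (z - yy) (x' - yy)"
  proof -
    have e: "u - yy = d + (x' - yy)" unfolding d_def by simp
    show ?thesis unfolding e inner_add_right ..
  qed
  define P where "P = (x0 - xj) + (A j * mu) *\<^sub>R (x' - xj) + (a j * L) *\<^sub>R (z - yy) + (a j * mu) *\<^sub>R (x' - yy)"
  have "P - (x0 - x') = 0" using W_zero[of j] unfolding P_def xj_def x'_def yy_def z_def mu_def .
  hence "inner (P - (x0 - x')) d = 0" by simp
  hence W: "inner (x0 - xj) d = inner (x0 - x') d - A j * mu * inner (x' - xj) d - a j * L * inner (z - yy) d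
      - a j * mu * inner (x' - yy) d"
    unfolding inner_diff_left[of P "x0 - x'" d] unfolding P_def by (simp add: inner_add_left)
  have "A (Suc j) * Gam (Suc j) u = A (Suc j) * Gam (Suc j) x' + inner (x0 - x') d + A (Suc j) * mu / 2 * (norm d)\<^sup>2"
    by (rule real_comb[OF Gam_suc_mul[of j u] Gam_suc_mul[of j x'] IHu IHx Gu Gx n1 n2 i1 i2 W A_suc])
  then show ?case unfolding x'_def d_def mu_def .
qed
end

lemma norm_comb:
  fixes p q :: "'a::real_inner"
  assumes "al \<ge> 0" "be \<ge> 0"
  shows "(norm (al *\<^sub>R p + be *\<^sub>R q))\<^sup>2 \<le> (al + be) * (al * (norm p)\<^sup>2 + be * (norm q)\<^sup>2)"
proof -
  have e1: "(norm (al *\<^sub>R p + be *\<^sub>R q))\<^sup>2 = al\<^sup>2 * (norm p)\<^sup>2 + 2 * (al * be) * inner p q + be\<^sup>2 * (norm q)\<^sup>2"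
    unfolding norm_sq_add by (simp add: power_mult_distrib)
  have e2: "(norm (p - q))\<^sup>2 = (norm p)\<^sup>2 - 2 * inner p q + (norm q)\<^sup>2" by (rule norm_sq_diff)
  have "0 \<le> al * be * (norm (p - q))\<^sup>2" using assms by simp
  moreover define N where "N = (norm (p - q))\<^sup>2"
  moreover define I where "I = inner p q"
  moreover define np where "np = (norm p)\<^sup>2"
  moreover define nq where "nq = (norm q)\<^sup>2"
  ultimately have "0 \<le> al * be * (np - 2 * I + nq)" using e2 by simp
  then have "al\<^sup>2 * np + 2 * (al * be) * I + be\<^sup>2 * nq \<le> (al + be) * (al * np + be * nq)"
    by (simp add: algebra_simps power2_eq_square)
  then show ?thesis unfolding e1 I_def np_def nq_def .
qed

context acgl begin

definition M where "M j = A j * Gam j (x j) + 1 / 2 * (norm (x j - x0))\<^sup>2"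

lemma Mform: "A j * Gam j u + 1 / 2 * (norm (u - x0))\<^sup>2 = M j + (1 + A j * (1 / lam)) / 2 * (norm (u - x j))\<^sup>2"
proof -
  have "(norm (u - x0))\<^sup>2 = (norm (u - x j))\<^sup>2 - 2 * inner (u - x j) (x0 - x j) + (norm (x0 - x j))\<^sup>2"
    using norm_sq_diff[of "u - x j" "x0 - x j"] by simp
  moreover have "inner (u - x j) (x0 - x j) = inner (x0 - x j) (u - x j)" by (rule inner_commute)
  moreover have "norm (x0 - x j) = norm (x j - x0)" by (rule norm_minus_commute)
  moreover note Gam_quad[of j u]
  moreover define I where "I = inner (x0 - x j) (u - x j)"
  moreover define N0 where "N0 = (norm (u - x0))\<^sup>2"
  moreover define N1 where "N1 = (norm (u - x j))\<^sup>2"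
  moreover define Nx where "Nx = (norm (x j - x0))\<^sup>2"
  ultimately have "N0 = N1 - 2 * I + Nx" "A j * Gam j u = A j * Gam j (x j) + I + A j * (1 / lam) / 2 * N1"
    by simp_all
  then have "A j * Gam j u + 1 / 2 * N0 = (A j * Gam j (x j) + 1 / 2 * Nx) + (1 + A j * (1 / lam)) / 2 * N1"
    by (simp add: field_simps)
  then show ?thesis unfolding M_def N0_def N1_def Nx_def .
qed


lemma step_est:
  assumes hyp: "A j * gam j (y j) \<le> M j"
  shows "\<exists>P. psi (y (Suc j)) = ereal P \<and> A (Suc j) * P \<le> M (Suc j)"
proof -
  define xj where "xj = x j"
  define x' where "x' = x (Suc j)"
  define yy where "yy = yt (Suc j)"
  define z where "z = xt j"
  define yj where "yj = y j"
  define mu where "mu = 1 / lam"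
  define A' where "A' = A (Suc j)"
  define w where "w = (A j / A') *\<^sub>R yj + (a j / A') *\<^sub>R x'"
  have A'pos: "A' > 0" unfolding A'_def by (rule Asuc_pos)
  have A'eq: "A' = A j + a j" unfolding A'_def by (rule A_suc)
  have mu0: "mu > 0" unfolding mu_def using lam_pos by simp
  obtain hyy where hyy: "h yy = ereal hyy" using h_yt_fin[of j] h_nm[of yy] unfolding yy_def by (cases "h (yt (Suc j))") auto
  define Pyy where "Pyy = g yy + hyy"
  have psiyy: "psi yy = ereal Pyy" by (simp add: psi_def hyy Pyy_def)
  obtain P where P: "psi (y (Suc j)) = ereal P" and PP: "P \<le> Pyy"
  proof -
    have le: "psi (y (Suc j)) \<le> ereal Pyy" using psi_yt[of j] psiyy unfolding yy_def by simp
    moreover have "psi (y (Suc j)) \<noteq> -\<infinity>" unfolding psi_def using h_nm[of "y (Suc j)"] by simp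
    ultimately obtain P where "psi (y (Suc j)) = ereal P" by (cases "psi (y (Suc j))") auto
    with le show ?thesis using that by simp
  qed
  have gyy: "gam j yy = g z + inner (dg z) (yy - z) + hyy + mu / 2 * (norm (yy - z))\<^sup>2"
    unfolding gam_def lin_approx_def yy_def[symmetric] z_def[symmetric] mu_def[symmetric] hyy by simp
  have c1: "Pyy \<le> gam j yy + L / 2 * (norm (yy - z))\<^sup>2"
  proof -
    have "g yy \<le> g z + inner (dg z) (yy - z) + (L + 1 / lam) / 2 * (norm (yy - z))\<^sup>2" by (rule g_upper)
    moreover have "(L + 1 / lam) / 2 * (norm (yy - z))\<^sup>2 = L / 2 * (norm (yy - z))\<^sup>2 + mu / 2 * (norm (yy - z))\<^sup>2"
      unfolding mu_def by (simp add: algebra_simps)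
    ultimately show ?thesis unfolding Pyy_def gyy by linarith
  qed
  have c2: "gam j yy + L / 2 * (norm (yy - z))\<^sup>2 \<le> gam j w + L / 2 * (norm (w - z))\<^sup>2"
  proof -
    have gw: "gam j w = gam j yy + L * inner (z - yy) (w - yy) + mu / 2 * (norm (w - yy))\<^sup>2"
      using gam_form[of j w] unfolding yy_def z_def mu_def .
    have "w - z = (w - yy) - (z - yy)" by simp
    hence nw: "(norm (w - z))\<^sup>2 = (norm (w - yy))\<^sup>2 - 2 * inner (w - yy) (z - yy) + (norm (z - yy))\<^sup>2"
      by (metis norm_sq_diff)
    have ic: "inner (z - yy) (w - yy) = inner (w - yy) (z - yy)" by (rule inner_commute)
    have nc: "norm (yy - z) = norm (z - yy)" by (rule norm_minus_commute)
    have "0 \<le> mu / 2 * (norm (w - yy))\<^sup>2 + L / 2 * (norm (w - yy))\<^sup>2" using mu0 L_pos by simp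
    moreover have "L / 2 * (norm (w - z))\<^sup>2 = L / 2 * (norm (w - yy))\<^sup>2 - L * inner (w - yy) (z - yy) + L / 2 * (norm (z - yy))\<^sup>2"
      unfolding nw by (simp add: algebra_simps)
    ultimately show ?thesis unfolding gw ic nc by linarith
  qed
  have c3: "A' * gam j w \<le> A j * gam j yj + a j * gam j x'"
  proof -
    define G0 where "G0 = gam j yy"
    define c where "c = z - yy"
    have gv: "\<And>v. gam j v = G0 + L * inner c (v - yy) + mu / 2 * (norm (v - yy))\<^sup>2"
      using gam_form unfolding G0_def c_def yy_def z_def mu_def by blast
    have ww: "A' *\<^sub>R w = A j *\<^sub>R yj + a j *\<^sub>R x'"
      unfolding w_def using A'pos by (simp add: scaleR_add_right)
    have wv: "A' *\<^sub>R (w - yy) = A j *\<^sub>R (yj - yy) + a j *\<^sub>R (x' - yy)"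
      unfolding scaleR_diff_right ww using A'eq by (simp add: algebra_simps)
    have i: "A' * inner c (w - yy) = A j * inner c (yj - yy) + a j * inner c (x' - yy)"
    proof -
      have "A' * inner c (w - yy) = inner c (A' *\<^sub>R (w - yy))" by simp
      also have "\<dots> = A j * inner c (yj - yy) + a j * inner c (x' - yy)" unfolding wv by (simp add: inner_add_right)
      finally show ?thesis .
    qed
    have n: "A' * (norm (w - yy))\<^sup>2 \<le> A j * (norm (yj - yy))\<^sup>2 + a j * (norm (x' - yy))\<^sup>2"
    proof -
      have "A' * (A' * (norm (w - yy))\<^sup>2) = (norm (A' *\<^sub>R (w - yy)))\<^sup>2"
        using A'pos by (simp add: power2_eq_square)
      also have "\<dots> \<le> (A j + a j) * (A j * (norm (yj - yy))\<^sup>2 + a j * (norm (x' - yy))\<^sup>2)"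
        unfolding wv using A_nonneg[of j] a_pos[of j] by (intro norm_comb) auto
      finally have "A' * (A' * (norm (w - yy))\<^sup>2) \<le> A' * (A j * (norm (yj - yy))\<^sup>2 + a j * (norm (x' - yy))\<^sup>2)"
        unfolding A'eq .
      then show ?thesis using A'pos by simp
    qed
    have "A' * gam j w = A' * G0 + L * (A' * inner c (w - yy)) + mu / 2 * (A' * (norm (w - yy))\<^sup>2)"
      unfolding gv[of w] by (simp add: algebra_simps)
    also have "\<dots> \<le> A' * G0 + L * (A j * inner c (yj - yy) + a j * inner c (x' - yy))
        + mu / 2 * (A j * (norm (yj - yy))\<^sup>2 + a j * (norm (x' - yy))\<^sup>2)"
      unfolding i using n mu0 by simp
    also have "\<dots> = A j * gam j yj + a j * gam j x'"
      unfolding gv[of yj] gv[of x'] A'eq by (simp add: algebra_simps)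
    finally show ?thesis .
  qed
  have c4: "A' * (L / 2 * (norm (w - z))\<^sup>2) = (1 + A j * mu) / 2 * (norm (x' - xj))\<^sup>2"
  proof -
    have "w - z = (a j / A') *\<^sub>R (x' - xj)"
      unfolding w_def z_def xt_eq A'_def[symmetric] yj_def xj_def by (simp add: algebra_simps)
    hence "(norm (w - z))\<^sup>2 = (a j / A')\<^sup>2 * (norm (x' - xj))\<^sup>2"
      by (simp add: power_mult_distrib power_divide power2_abs)
    moreover have "(a j)\<^sup>2 * L = (1 + mu * A j) * A'" using a_sqL[of j] unfolding mu_def A'_def .
    ultimately show ?thesis
    proof -
      assume n: "(norm (w - z))\<^sup>2 = (a j / A')\<^sup>2 * (norm (x' - xj))\<^sup>2" and e: "(a j)\<^sup>2 * L = (1 + mu * A j) * A'"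
      define N where "N = (norm (x' - xj))\<^sup>2"
      have "A' * (L / 2 * ((a j / A')\<^sup>2 * N)) = ((a j)\<^sup>2 * L) * N / (2 * A')"
        using A'pos by (simp add: field_simps power2_eq_square)
      also have "\<dots> = ((1 + mu * A j) * A') * N / (2 * A')" by (simp only: e)
      also have "\<dots> = (1 + A j * mu) / 2 * N" using A'pos by (simp add: field_simps)
      finally show ?thesis unfolding n N_def .
    qed
  qed
  have c5: "M (Suc j) = M j + (1 + A j * mu) / 2 * (norm (x' - xj))\<^sup>2 + a j * gam j x'"
  proof -
    have "A (Suc j) * Gam (Suc j) x' + 1 / 2 * (norm (x' - x0))\<^sup>2 = M (Suc j)"
      using Mform[of "Suc j" x'] unfolding x'_def by simp
    moreover have "A j * Gam j x' + 1 / 2 * (norm (x' - x0))\<^sup>2 = M j + (1 + A j * mu) / 2 * (norm (x' - xj))\<^sup>2"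
      using Mform[of j x'] unfolding xj_def mu_def .
    moreover note Gam_suc_mul[of j x']
    ultimately show ?thesis by linarith
  qed
  have "A' * P \<le> A' * Pyy" using PP A'pos by simp
  also have "\<dots> \<le> A' * (gam j w + L / 2 * (norm (w - z))\<^sup>2)"
    using c1 c2 A'pos by (intro mult_left_mono) auto
  also have "\<dots> = A' * gam j w + (1 + A j * mu) / 2 * (norm (x' - xj))\<^sup>2"
    using c4 by (simp add: algebra_simps)
  also have "\<dots> \<le> M (Suc j)"
    using c3 c5 hyp unfolding yj_def by linarith
  finally show ?thesis using P unfolding A'_def by blast
qed

lemma main_est: "\<exists>P. psi (y (Suc j)) = ereal P \<and> A (Suc j) * P \<le> M (Suc j)"
proof (induction j)
  case 0
  have "A 0 * gam 0 (y 0) \<le> M 0" unfolding M_def using A0 xx0 by simp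
  then show ?case by (rule step_est)
next
  case (Suc j)
  then obtain P where P: "psi (y (Suc j)) = ereal P" "A (Suc j) * P \<le> M (Suc j)" by blast
  have "gam (Suc j) (y (Suc j)) \<le> P" using gam_le[of "Suc j" "y (Suc j)"] P(1) by simp
  hence "A (Suc j) * gam (Suc j) (y (Suc j)) \<le> A (Suc j) * P" using A_nonneg by (simp add: mult_left_mono)
  with P(2) have "A (Suc j) * gam (Suc j) (y (Suc j)) \<le> M (Suc j)" by linarith
  then show ?case by (rule step_est)
qed
end

lemma ln_lower:
  fixes x :: real
  assumes "x \<ge> 0"
  shows "2 * x / (2 + x) \<le> ln (1 + x)"
proof -
  define F where "F = (\<lambda>t::real. ln (1 + t) - 2 * t / (2 + t))"
  have "F 0 \<le> F x"
  proof (rule DERIV_nonneg_imp_nondecreasing[of 0 x F])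
    show "0 \<le> x" using assms .
    fix t :: real assume t: "0 \<le> t" "t \<le> x"
    have D: "DERIV F t :> 1 / (1 + t) - (2 * (2 + t) - 2 * t) / (2 + t)\<^sup>2"
      unfolding F_def using t
      by (auto intro!: derivative_eq_intros simp: power2_eq_square field_simps)
    have nz: "1 + t \<noteq> 0" "(2 + t)\<^sup>2 \<noteq> 0" using t by auto
    have q0: "2 * (2 + t) - 2 * t = 4" by simp
    have q1: "1 / (1 + t) = (2 + t)\<^sup>2 / ((1 + t) * (2 + t)\<^sup>2)" using nz by simp
    have q2: "4 / (2 + t)\<^sup>2 = (4 * (1 + t)) / ((1 + t) * (2 + t)\<^sup>2)"
      using nonzero_mult_divide_mult_cancel_left[OF nz(1), of 4 "(2 + t)\<^sup>2"] by (metis mult.commute)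
    have "1 / (1 + t) - (2 * (2 + t) - 2 * t) / (2 + t)\<^sup>2 = ((2 + t)\<^sup>2 - 4 * (1 + t)) / ((1 + t) * (2 + t)\<^sup>2)"
      unfolding q0 q1 q2 diff_divide_distrib ..
    also have "(2 + t)\<^sup>2 - 4 * (1 + t) = t\<^sup>2" by (simp add: power2_eq_square algebra_simps)
    finally have "1 / (1 + t) - (2 * (2 + t) - 2 * t) / (2 + t)\<^sup>2 = t\<^sup>2 / ((1 + t) * (2 + t)\<^sup>2)" .
    also have "\<dots> \<ge> 0" using t by simp
    finally show "\<exists>y. DERIV F t :> y \<and> 0 \<le> y" using D by blast
  qed
  then show ?thesis unfolding F_def by simp
qed

lemma ln_186: "ln (1.86::real) \<ge> 0.6"
proof -
  have "2 * 0.86 / (2 + 0.86) \<le> ln (1 + (0.86::real))" by (rule ln_lower) simp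
  moreover have "(0.6::real) \<le> 2 * 0.86 / (2 + 0.86)" by simp
  ultimately show ?thesis by simp
qed

lemma analytic:
  fixes w :: real and J :: nat
  assumes w: "w > 0" "w\<^sup>2 > 1 / 2" and J2: "J \<ge> 2"
    and JB: "real J \<ge> (1 / 2 + w) * ln (6 * w\<^sup>2)"
  shows "w\<^sup>2 / 0.31 \<le> (1 + 1 / w + 1 / (2 * w\<^sup>2)) ^ (J - 1)"
proof -
  have w7: "w \<ge> 0.7"
  proof (rule ccontr)
    assume "\<not> w \<ge> 0.7"
    hence "w < 0.7" by simp
    hence "w * w < 0.7 * 0.7" using w(1) by (intro mult_strict_mono) auto
    thus False using w(2) by (simp add: power2_eq_square)
  qed
  define p where "p = 1 + 1 / w + 1 / (2 * w\<^sup>2)"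
  define D1 where "D1 = 4 * w\<^sup>2 + 2 * w + 1"
  define u where "u = 2 * (2 * w + 1) / D1"
  define t where "t = 2 / (2 * w + 1)"
  have D1pos: "D1 > 0" unfolding D1_def using w by (simp add: add_pos_pos)
  have ppos: "p > 0" unfolding p_def using w by (simp add: add_pos_pos)
  have lnp: "u \<le> ln p"
  proof -
    have "2 * (p - 1) / (2 + (p - 1)) \<le> ln (1 + (p - 1))"
      by (rule ln_lower) (simp add: p_def w(1) less_imp_le)
    moreover have "2 * (p - 1) / (2 + (p - 1)) = u"
    proof -
      have w2: "2 * w\<^sup>2 > 0" using w(1) by simp
      have e1: "p - 1 = (2 * w + 1) / (2 * w\<^sup>2)" unfolding p_def using w(1) by (simp add: field_simps power2_eq_square)
      have e2: "2 + (p - 1) = D1 / (2 * w\<^sup>2)" unfolding e1 D1_def using w2 by (simp add: field_simps)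
      show ?thesis unfolding e2 unfolding e1 u_def using w2 D1pos by (simp add: field_simps)
    qed
    ultimately show ?thesis by simp
  qed
  define B where "B = 2 * w + 1"
  have Bpos: "B > 0" unfolding B_def using w(1) by simp
  have ut0: "u - t \<ge> 0"
  proof -
    have "D1 \<le> B\<^sup>2" unfolding D1_def B_def using w(1) by (simp add: power2_eq_square algebra_simps)
    hence "2 * B / B\<^sup>2 \<le> 2 * B / D1" using D1pos Bpos by (intro divide_left_mono) auto
    moreover have "2 * B / B\<^sup>2 = t" unfolding t_def B_def[symmetric] using Bpos by (simp add: power2_eq_square)
    moreover have "2 * B / D1 = u" unfolding u_def B_def by simp
    ultimately show ?thesis by simp
  qed
  have tu: "2 * t - u \<le> 0.6"
  proof -
    have f1: "4 / B = (4 * D1) / (B * D1)" using D1pos Bpos by simp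
    have f2: "2 * B / D1 = (2 * B * B) / (B * D1)" using D1pos Bpos by simp
    have e: "2 * t - u = (4 * D1 - 2 * B * B) / (B * D1)"
      unfolding t_def u_def B_def[symmetric] by (simp add: f1 f2 diff_divide_distrib)
    have p1: "4 * D1 - 2 * B * B = 8 * w\<^sup>2 + 2" unfolding D1_def B_def by (simp add: power2_eq_square algebra_simps)
    have p2: "B * D1 = 8 * (w\<^sup>2 * w) + 8 * w\<^sup>2 + 4 * w + 1" unfolding D1_def B_def by (simp add: power2_eq_square algebra_simps)
    have "w\<^sup>2 * (4.8 * w - 3.2) \<ge> 0" using w7 by simp
    hence p3: "4.8 * (w\<^sup>2 * w) - 3.2 * w\<^sup>2 \<ge> 0" by (simp add: algebra_simps)
    have p4: "0.6 * (B * D1) = 4.8 * (w\<^sup>2 * w) + 4.8 * w\<^sup>2 + 2.4 * w + 0.6" unfolding p2 by (simp add: algebra_simps)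
    have "4 * D1 - 2 * B * B \<le> 0.6 * (B * D1)" unfolding p1 p4 using p3 w7 by linarith
    moreover have "B * D1 > 0" using D1pos Bpos by simp
    ultimately show ?thesis unfolding e by (simp add: pos_divide_le_eq mult.commute)
  qed
  define l where "l = ln (6 * w\<^sup>2)"
  have lt: "l \<le> t * real J"
  proof -
    have "(1 / 2 + w) * l \<le> real J" using JB unfolding l_def .
    hence "l \<le> real J / (1 / 2 + w)" using w(1) by (simp add: pos_le_divide_eq mult.commute)
    moreover have "real J / (1 / 2 + w) = t * real J" unfolding t_def using w(1) by (simp add: field_simps)
    ultimately show ?thesis by simp
  qed
  have lw: "ln (w\<^sup>2 / 0.31) = l - ln 1.86"
  proof -
    have "6 * w\<^sup>2 = 1.86 * (w\<^sup>2 / 0.31)" by simp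
    hence "l = ln (1.86 * (w\<^sup>2 / 0.31))" unfolding l_def by simp
    also have "\<dots> = ln 1.86 + ln (w\<^sup>2 / 0.31)" by (rule ln_mult_pos) (use w(1) in auto)
    finally show ?thesis by simp
  qed
  have Jr: "real (J - 1) = real J - 1" using J2 by simp
  have "(real J - 1) * u - t * real J = (real J - 2) * (u - t) + (u - 2 * t)" by (simp add: algebra_simps)
  moreover have "(real J - 2) * (u - t) \<ge> 0" using J2 ut0 by (intro mult_nonneg_nonneg) auto
  ultimately have "t * real J - 0.6 \<le> (real J - 1) * u" using tu by linarith
  moreover have "(real J - 1) * u \<le> (real J - 1) * ln p" using lnp J2 by (intro mult_left_mono) auto
  ultimately have L1: "ln (w\<^sup>2 / 0.31) \<le> (real J - 1) * ln p"
    using lw lt ln_186 by linarith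
  have L2: "ln (p ^ (J - 1)) = (real J - 1) * ln p" using ppos Jr by (simp add: ln_realpow)
  have pos1: "w\<^sup>2 / 0.31 > 0" using w(1) by simp
  have pos2: "p ^ (J - 1) > 0" using ppos by simp
  have "ln (w\<^sup>2 / 0.31) \<le> ln (p ^ (J - 1))" using L1 L2 by linarith
  hence "w\<^sup>2 / 0.31 \<le> p ^ (J - 1)" using ln_le_cancel_iff[OF pos1 pos2] by blast
  then show ?thesis unfolding p_def .
qed

lemma final_arith:
  fixes s na nb ab nc cb E :: real
  assumes s0: "s > 0" and E1: "E \<le> s * na - 2 * s * ab - nb" and E0: "0 \<le> E"
    and nceq: "nc = na - 2 * ab + nb" and cbeq: "cb = ab - nb" and cs: "0 \<le> nc - 4 * cb + 4 * nb"
    and nb0: "nb \<ge> 0" and nc0: "nc \<ge> 0"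
    and cond: "s \<le> 0.31 \<or> (s \<le> 1 / 2 \<and> ((nb = 0 \<and> cb = 0) \<or> (nc = 0 \<and> cb = 0)))"
  shows "s\<^sup>2 * na + 2 * s * ab + nb + E \<le> 0.9 * nc"
proof -
  have L1: "s\<^sup>2 * na + 2 * s * ab + nb + E \<le> s * (1 + s) * na"
  proof -
    have "s * (1 + s) * na = s * na + s\<^sup>2 * na" by (simp add: algebra_simps power2_eq_square)
    then show ?thesis using E1 by linarith
  qed
  have naeq: "na = nc + 2 * cb + nb" using nceq cbeq by linarith
  have sx: "s * na - 2 * s * ab = s * (nc - nb)" unfolding nceq by (simp add: algebra_simps)
  have nbs: "nb * (1 + s) \<le> s * nc"
  proof -
    have "0 \<le> s * (nc - nb) - nb" using E1 E0 sx by linarith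
    then show ?thesis by (simp add: algebra_simps)
  qed
  have ss: "s * (1 + s) \<ge> 0" using s0 by simp
  from cond show ?thesis
  proof (elim disjE conjE)
    assume s31: "s \<le> 0.31"
    have "na \<le> 1.5 * nc + 3 * nb" using naeq cs by linarith
    hence "s * (1 + s) * na \<le> s * (1 + s) * (1.5 * nc + 3 * nb)" using ss by (rule mult_left_mono)
    also have "\<dots> = 1.5 * (s * (1 + s)) * nc + 3 * s * (nb * (1 + s))" by (simp add: algebra_simps)
    also have "\<dots> \<le> 1.5 * (s * (1 + s)) * nc + 3 * s * (s * nc)"
      using nbs s0 by (intro add_left_mono mult_left_mono) auto
    also have "\<dots> = (1.5 * s + 4.5 * s\<^sup>2) * nc" by (simp add: field_simps power2_eq_square)
    also have "\<dots> \<le> 0.9 * nc"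
    proof (rule mult_right_mono[OF _ nc0])
      have s31': "s \<le> 31 / 100" using s31 by simp
      have "s * s \<le> 31 / 100 * s" using s31' s0 by (intro mult_right_mono) auto
      hence "s\<^sup>2 \<le> 31 / 100 * s" by (simp add: power2_eq_square)
      hence "3 / 2 * s + 9 / 2 * s\<^sup>2 \<le> 9 / 10" using s31' by linarith
      then show "1.5 * s + 4.5 * s\<^sup>2 \<le> 0.9" by simp
    qed
    finally show ?thesis using L1 by linarith
  next
    assume s2: "s \<le> 1 / 2" and "nb = 0" "cb = 0"
    hence "na = nc" using naeq by simp
    have "s * (1 + s) \<le> 3 / 4"
    proof -
      have "s * (1 + s) \<le> (1/2) * (1 + 1/2)" using s2 s0 by (intro mult_mono) auto
      then show ?thesis by simp
    qed
    hence "s * (1 + s) * nc \<le> 3 / 4 * nc" using nc0 by (rule mult_right_mono)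
    hence "s * (1 + s) * na \<le> 3 / 4 * nc" using \<open>na = nc\<close> by simp
    then show ?thesis using L1 nc0 by linarith
  next
    assume s2: "s \<le> 1 / 2" and "nc = 0" "cb = 0"
    hence "nb * (1 + s) \<le> 0" using nbs by simp
    hence "nb = 0" using nb0 s0 by (simp add: mult_le_0_iff)
    hence "na = 0" using naeq \<open>nc = 0\<close> \<open>cb = 0\<close> by simp
    then show ?thesis using L1 \<open>nc = 0\<close> by simp
  qed
qed

context acgl begin

lemma x1: "x 1 = yt 1"
proof -
  have "x (Suc 0) = (1 / (A 1 * (1 / lam) + 1)) *\<^sub>R (((L + 1 / lam) * a 0) *\<^sub>R yt 1 - (A 0 * a 0 * L / A 1) *\<^sub>R y 0)"
    using x_suc[of 0] by simp
  also have "\<dots> = yt 1"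
  proof -
    have "(L + 1 / lam) * a 0 = A 1 * (1 / lam) + 1" unfolding a0 A1 using L_pos by (simp add: field_simps)
    moreover have "A 1 * (1 / lam) + 1 > 0" unfolding A1 using L_pos lam_pos by (simp add: add_pos_pos)
    ultimately show ?thesis using A0 by simp
  qed
  finally show ?thesis by simp
qed

lemma good:
  assumes j1: "j \<ge> 1" and cond: "lam / A j \<le> 0.31 \<or> (j = 1 \<and> lam / A j \<le> 1 / 2)"
  shows "let phi = (\<lambda>u. ereal (f u) + h u);
          v = (1 / A j) *\<^sub>R (x0 - x j) + (1 / lam) *\<^sub>R (x0 - x j);
          phi_j = (\<lambda>u. Gam j u - 1 / (2 * lam) * (norm (u - x0))\<^sup>2);
          eps = real_of_ereal (phi (y j)) - phi_j (x j) - inner v (y j - x j)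
      in v \<in> eps_subdiff phi eps (y j) \<and>
         (norm (lam *\<^sub>R v + y j - x0))\<^sup>2 + 2 * lam * eps \<le> 0.9 * (norm (x0 - y j))\<^sup>2"
proof -
  define v where "v = (1 / A j) *\<^sub>R (x0 - x j) + (1 / lam) *\<^sub>R (x0 - x j)"
  define phj where "phj = (\<lambda>u. Gam j u - 1 / (2 * lam) * (norm (u - x0))\<^sup>2)"
  define phi where "phi = (\<lambda>u. ereal (f u) + h u)"
  define q where "q = (\<lambda>u. 1 / (2 * lam) * (norm (u - x0))\<^sup>2)"
  define xj where "xj = x j"
  define yj where "yj = y j"
  have Aj: "A j > 0" using A_pos j1 by simp
  obtain k where jk: "j = Suc k" using j1 by (cases j) auto
  obtain P where P: "psi yj = ereal P" and AP: "A j * P \<le> M j"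
    using main_est[of k] unfolding jk yj_def by blast
  have gq: "\<And>u. g u = f u + q u" unfolding g_def q_def by simp
  have phiy: "phi yj = ereal (P - q yj)"
  proof -
    have "h yj \<noteq> \<infinity>" using P unfolding psi_def by auto
    then obtain hy where hy: "h yj = ereal hy" using h_nm[of yj] by (cases "h yj") auto
    then have "P = g yj + hy" using P unfolding psi_def by simp
    then show ?thesis unfolding phi_def hy gq by simp
  qed
  define eps where "eps = real_of_ereal (phi yj) - phj xj - inner v (yj - xj)"
  have aff: "\<And>u. phj u = phj xj + inner v (u - xj)"
  proof -
    fix u
    have G: "A j * Gam j u = A j * Gam j xj + inner (x0 - xj) (u - xj) + A j * (1 / lam) / 2 * (norm (u - xj))\<^sup>2"
      using Gam_quad[of j u] unfolding xj_def .
    have G': "Gam j u = Gam j xj + (1 / A j) * inner (x0 - xj) (u - xj) + (1 / lam) / 2 * (norm (u - xj))\<^sup>2"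
    proof -
      have "Gam j u = (A j * Gam j u) / A j" using Aj by simp
      also have "\<dots> = Gam j xj + (1 / A j) * inner (x0 - xj) (u - xj) + (1 / lam) / 2 * (norm (u - xj))\<^sup>2"
        unfolding G using Aj by (simp add: field_simps)
      finally show ?thesis .
    qed
    have Q: "q u = q xj + inner ((1 / lam) *\<^sub>R (xj - x0)) (u - xj) + 1 / lam / 2 * (norm (u - xj))\<^sup>2"
      unfolding q_def by (rule quad_id)
    have I: "inner v (u - xj) = (1 / A j) * inner (x0 - xj) (u - xj) + (1 / lam) * inner (x0 - xj) (u - xj)"
      unfolding v_def xj_def[symmetric] by (simp add: inner_add_left)
    have Q': "inner ((1 / lam) *\<^sub>R (xj - x0)) (u - xj) = - ((1 / lam) * inner (x0 - xj) (u - xj))"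
    proof -
      have "xj - x0 = - (x0 - xj)" by simp
      then show ?thesis by (simp only: inner_scaleR_left inner_minus_left)
    qed
    have "phj u = Gam j u - q u" "phj xj = Gam j xj - q xj" unfolding phj_def q_def by simp_all
    then show "phj u = phj xj + inner v (u - xj)"
      using G' Q I Q' by linarith
  qed
  have part1: "v \<in> eps_subdiff phi eps yj"
  proof -
    have "phi yj + ereal (inner v (u - yj) - eps) \<le> phi u" for u
    proof -
      have "inner v (yj - xj) + inner v (u - yj) = inner v (u - xj)" by (simp add: inner_diff_right)
      hence "phi yj + ereal (inner v (u - yj) - eps) = ereal (phj u)"
        unfolding phiy eps_def using aff[of u] by simp
      also have "\<dots> \<le> phi u"
      proof (cases "h u = \<infinity>")
        case True then show ?thesis unfolding phi_def by simp
      next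
        case False
        then obtain hu where hu: "h u = ereal hu" using h_nm[of u] by (cases "h u") auto
        have "Gam j u \<le> g u + hu" using Gam_le[OF j1, of u "g u + hu"] unfolding psi_def hu by simp
        then show ?thesis unfolding phi_def phj_def hu gq q_def by simp
      qed
      finally show ?thesis .
    qed
    then show ?thesis unfolding eps_subdiff_def by blast
  qed
  define s where "s = lam / A j"
  define va where "va = x0 - xj"
  define vb where "vb = yj - xj"
  define na where "na = (norm va)\<^sup>2"
  define nb where "nb = (norm vb)\<^sup>2"
  define ab where "ab = inner va vb"
  define nc where "nc = (norm (x0 - yj))\<^sup>2"
  define cb where "cb = inner (x0 - yj) vb"
  have s0: "s > 0" unfolding s_def using Aj lam_pos by simp
  have lhs: "(norm (lam *\<^sub>R v + yj - x0))\<^sup>2 = s\<^sup>2 * na + 2 * s * ab + nb"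
  proof -
    have e: "lam *\<^sub>R v + yj - x0 = s *\<^sub>R va + vb"
      unfolding v_def s_def va_def vb_def xj_def[symmetric] using lam_pos by (simp add: algebra_simps)
    show ?thesis unfolding e na_def nb_def ab_def norm_sq_add by (simp add: power_mult_distrib power2_abs)
  qed
  have eps_eq: "eps = P - Gam j yj"
  proof -
    have "real_of_ereal (phi yj) = P - q yj" unfolding phiy by simp
    then show ?thesis unfolding eps_def using aff[of yj] unfolding phj_def q_def by simp
  qed
  have E0: "0 \<le> 2 * lam * eps" unfolding eps_eq using Gam_le[OF j1 P] lam_pos by simp
  have E1: "2 * lam * eps \<le> s * na - 2 * s * ab - nb"
  proof -
    have G: "A j * Gam j yj = A j * Gam j xj + ab + A j * (1 / lam) / 2 * nb"
      using Gam_quad[of j yj] unfolding xj_def[symmetric] ab_def nb_def va_def vb_def .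
    have Mj: "M j = A j * Gam j xj + 1 / 2 * na"
      unfolding M_def na_def va_def xj_def by (simp add: norm_minus_commute)
    have "A j * eps \<le> 1 / 2 * na - ab - A j * (1 / lam) / 2 * nb"
      unfolding eps_eq using G Mj AP by (simp add: algebra_simps)
    hence "(2 * s) * (A j * eps) \<le> (2 * s) * (1 / 2 * na - ab - A j * (1 / lam) / 2 * nb)"
      using s0 by (intro mult_left_mono) auto
    moreover have "(2 * s) * (A j * eps) = 2 * lam * eps" unfolding s_def using Aj by simp
    moreover have "(2 * s) * (1 / 2 * na - ab - A j * (1 / lam) / 2 * nb) = s * na - 2 * s * ab - nb"
      unfolding s_def using Aj lam_pos by (simp add: field_simps)
    ultimately show ?thesis by simp
  qed
  have nceq: "nc = na - 2 * ab + nb"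
  proof -
    have e: "x0 - yj = va - vb" unfolding va_def vb_def by simp
    show ?thesis unfolding nc_def na_def nb_def ab_def e norm_sq_diff ..
  qed
  have cbeq: "cb = ab - nb"
  proof -
    have e: "x0 - yj = va - vb" unfolding va_def vb_def by simp
    show ?thesis unfolding cb_def ab_def nb_def e by (simp add: inner_diff_left power2_norm_eq_inner)
  qed
  have cs: "0 \<le> nc - 4 * cb + 4 * nb"
  proof -
    have "(norm ((x0 - yj) - 2 *\<^sub>R vb))\<^sup>2 = nc - 4 * cb + 4 * nb"
      unfolding norm_sq_diff nc_def cb_def nb_def by (simp add: power_mult_distrib)
    then show ?thesis by (metis zero_le_power2)
  qed
  have cond': "s \<le> 0.31 \<or> (s \<le> 1 / 2 \<and> ((nb = 0 \<and> cb = 0) \<or> (nc = 0 \<and> cb = 0)))"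
    using cond
  proof (elim disjE conjE)
    assume "lam / A j \<le> 0.31" then show ?thesis unfolding s_def by simp
  next
    assume j: "j = 1" and sh: "lam / A j \<le> 1 / 2"
    have "y 1 \<in> {y 0, yt 1}" using y_suc[of 0] by simp
    hence "yj = x0 \<or> yj = xj" unfolding yj_def xj_def j x1 y0 by auto
    then show ?thesis
    proof
      assume "yj = x0" then show ?thesis using sh unfolding s_def nc_def cb_def by simp
    next
      assume "yj = xj" then show ?thesis using sh unfolding s_def nb_def cb_def vb_def by simp
    qed
  qed
  have part2: "(norm (lam *\<^sub>R v + yj - x0))\<^sup>2 + 2 * lam * eps \<le> 0.9 * (norm (x0 - yj))\<^sup>2"
    unfolding lhs nc_def[symmetric]
    using final_arith[OF s0 E1 E0 nceq cbeq cs _ _ cond'] unfolding nb_def nc_def by simp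
  show ?thesis
    using part1 part2 unfolding Let_def eps_def v_def phi_def phj_def xj_def yj_def by blast
qed

end

theorem proposition2p8:
  fixes f :: "'a::euclidean_space \<Rightarrow> real" and df :: "'a \<Rightarrow> 'a"
    and h :: "'a \<Rightarrow> ereal" and L lam :: real and x0 :: 'a
    and A tau a :: "nat \<Rightarrow> real" and x y xt yt :: "nat \<Rightarrow> 'a" and Gam :: "nat \<Rightarrow> 'a \<Rightarrow> real"
  assumes L_pos: "L > 0"
    and f_convex: "convex_on UNIV f"
    and f_smooth: "L_smooth L f df"
    and h_pcc: "proper_closed_convex h"
    and dom_h: "{u. h u \<noteq> \<infinity>} \<subseteq> UNIV"
    and lam_pos: "lam > 0"
    and acg: "ACG_run L (1 / lam) (\<lambda>u. f u + 1 / (2 * lam) * (norm (u - x0))\<^sup>2)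
                (\<lambda>u. df u + (1 / lam) *\<^sub>R (u - x0)) h x0 A tau a x y xt yt Gam"
  shows "\<exists>j\<ge>1.
     real j \<le> max 1 (of_int \<lceil>min (2 * sqrt (6 * lam * L))
                                    ((1 / 2 + sqrt (lam * L)) * ln (6 * lam * L))\<rceil>) \<and>
     (let phi = (\<lambda>u. ereal (f u) + h u);
          v = (1 / A j) *\<^sub>R (x0 - x j) + (1 / lam) *\<^sub>R (x0 - x j);
          phi_j = (\<lambda>u. Gam j u - 1 / (2 * lam) * (norm (u - x0))\<^sup>2);
          eps = real_of_ereal (phi (y j)) - phi_j (x j) - inner v (y j - x j)
      in v \<in> eps_subdiff phi eps (y j) \<and>
         (norm (lam *\<^sub>R v + y j - x0))\<^sup>2 + 2 * lam * eps \<le> 0.9 * (norm (x0 - y j))\<^sup>2)"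
proof -
  interpret acgl f df h L lam x0 A tau a x y xt yt Gam
    using L_pos f_convex f_smooth h_pcc lam_pos acg by unfold_locales
  define B where "B = min (2 * sqrt (6 * lam * L)) ((1 / 2 + sqrt (lam * L)) * ln (6 * lam * L))"
  show ?thesis
  proof (cases "lam * L \<le> 1 / 2")
    case True
    have "lam / A 1 \<le> 1 / 2" using A1 True L_pos by simp
    then have G: "let phi = (\<lambda>u. ereal (f u) + h u);
          v = (1 / A 1) *\<^sub>R (x0 - x 1) + (1 / lam) *\<^sub>R (x0 - x 1);
          phi_j = (\<lambda>u. Gam 1 u - 1 / (2 * lam) * (norm (u - x0))\<^sup>2);
          eps = real_of_ereal (phi (y 1)) - phi_j (x 1) - inner v (y 1 - x 1)
      in v \<in> eps_subdiff phi eps (y 1) \<and>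
         (norm (lam *\<^sub>R v + y 1 - x0))\<^sup>2 + 2 * lam * eps \<le> 0.9 * (norm (x0 - y 1))\<^sup>2"
      using good[of 1] by simp
    show ?thesis by (rule exI[of _ 1]) (use G in simp)
  next
    case False
    hence wl: "lam * L > 1 / 2" by simp
    define w where "w = sqrt (lam * L)"
    have w0: "w > 0" unfolding w_def using wl by simp
    have w2: "w\<^sup>2 = lam * L" unfolding w_def using wl by simp
    have B1: "2 * sqrt (6 * lam * L) > 1"
    proof -
      have "sqrt (6 * lam * L) > sqrt 1" using wl by (intro real_sqrt_less_mono) (simp add: mult.assoc)
      then have "sqrt (6 * lam * L) > 1" by simp
      then show ?thesis by linarith
    qed
    have B2: "(1 / 2 + sqrt (lam * L)) * ln (6 * lam * L) > 1"
    proof -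
      have "ln 3 \<ge> (1::real)"
      proof -
        have "ln (exp 1) \<le> ln (3::real)" using exp_le by (subst ln_le_cancel_iff) auto
        then show ?thesis by simp
      qed
      moreover have "ln (6 * lam * L) > ln 3"
      proof -
        have "6 * lam * L = 6 * (lam * L)" by (simp add: mult.assoc)
        then have "6 * lam * L > 3" using wl by linarith
        then show ?thesis by (subst ln_less_cancel_iff) auto
      qed
      ultimately have l1: "ln (6 * lam * L) > 1" by simp
      have "w * w > 0.7 * 0.7" using wl w2 by (simp add: power2_eq_square)
      have "w > 0.7"
      proof (rule ccontr)
        assume "\<not> w > 0.7"
        hence "w * w \<le> 0.7 * 0.7" using w0 by (intro mult_mono) auto
        with \<open>w * w > 0.7 * 0.7\<close> show False by simp
      qed
      hence "1 / 2 + sqrt (lam * L) > 1" unfolding w_def by simp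
      then have "1 * 1 < (1 / 2 + sqrt (lam * L)) * ln (6 * lam * L)"
        using l1 by (intro mult_strict_mono) auto
      then show ?thesis by simp
    qed
    have Bgt: "B > 1" unfolding B_def using B1 B2 by simp
    define J where "J = nat \<lceil>B\<rceil>"
    have JB: "real J = of_int \<lceil>B\<rceil>" unfolding J_def using Bgt by simp
    have J2: "J \<ge> 2"
    proof -
      have c2: "\<lceil>B\<rceil> \<ge> 2" using Bgt by (simp add: le_ceiling_iff)
      show ?thesis unfolding J_def using c2 by (simp add: le_nat_iff)
    qed
    have JgeB: "real J \<ge> B" unfolding JB by simp
    have cond: "lam / A J \<le> 0.31"
    proof -
      have AJ: "A J > 0" using A_pos J2 by simp
      have "lam * L / 0.31 \<le> A J * L"
      proof (cases "real J \<ge> 2 * sqrt (6 * lam * L)")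
        case True
        have "(real J)\<^sup>2 \<ge> (2 * sqrt (6 * lam * L))\<^sup>2" using True L_pos lam_pos by (intro power_mono) auto
        moreover have "(2 * sqrt (6 * lam * L))\<^sup>2 = 24 * (lam * L)"
        proof -
          have "6 * lam * L \<ge> 0" using L_pos lam_pos by simp
          then have "(sqrt (6 * lam * L))\<^sup>2 = 6 * lam * L" by simp
          then show ?thesis by (simp add: power_mult_distrib)
        qed
        ultimately have "A J * L \<ge> 6 * (lam * L)" using quad_growth[of J] by linarith
        moreover have "lam * L / 0.31 \<le> 6 * (lam * L)" using wl L_pos lam_pos by simp
        ultimately show ?thesis by linarith
      next
        case False
        hence J0: "real J \<ge> (1 / 2 + sqrt (lam * L)) * ln (6 * lam * L)" using JgeB unfolding B_def by linarith
        have e6: "6 * w\<^sup>2 = 6 * lam * L" unfolding w2 by (simp add: mult.assoc)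
        have "(1 / 2 + w) * ln (6 * w\<^sup>2) = (1 / 2 + sqrt (lam * L)) * ln (6 * lam * L)" unfolding e6 unfolding w_def ..
        hence "real J \<ge> (1 / 2 + w) * ln (6 * w\<^sup>2)" using J0 by simp
        then have an: "w\<^sup>2 / 0.31 \<le> (1 + 1 / w + 1 / (2 * w\<^sup>2)) ^ (J - 1)"
          using analytic[OF w0 _ J2] w2 wl by simp
        have "(1 + 1 / w + 1 / (2 * w\<^sup>2)) ^ (J - 1) \<le> A (Suc (J - 1)) * L"
          using exp_growth[of "J - 1"] unfolding w_def using w2 w_def by (simp add: mult.assoc)
        moreover have "Suc (J - 1) = J" using J2 by simp
        ultimately show ?thesis using an w2 by simp
      qed
      then have "lam * L \<le> 0.31 * (A J * L)" by simp
      then have "lam \<le> 0.31 * A J" using L_pos by simp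
      then show ?thesis using AJ by (simp add: divide_le_eq mult.commute)
    qed
    have G: "let phi = (\<lambda>u. ereal (f u) + h u);
          v = (1 / A J) *\<^sub>R (x0 - x J) + (1 / lam) *\<^sub>R (x0 - x J);
          phi_j = (\<lambda>u. Gam J u - 1 / (2 * lam) * (norm (u - x0))\<^sup>2);
          eps = real_of_ereal (phi (y J)) - phi_j (x J) - inner v (y J - x J)
      in v \<in> eps_subdiff phi eps (y J) \<and>
         (norm (lam *\<^sub>R v + y J - x0))\<^sup>2 + 2 * lam * eps \<le> 0.9 * (norm (x0 - y J))\<^sup>2"
      using good[of J] J2 cond by simp
    have "real J \<le> max 1 (of_int \<lceil>min (2 * sqrt (6 * lam * L)) ((1 / 2 + sqrt (lam * L)) * ln (6 * lam * L))\<rceil>)"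
      using JB unfolding B_def by simp
    then show ?thesis using G J2 by (intro exI[of _ J]) simp
  qed
qed

end
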